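(* Let $L$ be a right Bol loop, i.e. a loop satisfying $x((yz)y)=((xy)z)y$ for all $x,y,z\in L$. If $L$ admits an anti-automorphism, then $L$ is a Moufang loop.
   Context: A loop is a set with a binary operation and a neutral element $1$ such that for all $a,b$ the equations $ax=b$ and $ya=b$ have unique solutions. An anti-automorphism of $L$ is a bijection $\varphi:L\to L$ with $\varphi(xy)=\varphi(y)\varphi(x)$ for all $x,y$. A left Bol loop satisfies $(x(yx))z=x(y(xz))$; a Moufang loop is a loop that is both a right Bol loop and a left Bol loop. *)

theory Defs
  imports Main
begin

definition is_loop :: "('a \<Rightarrow> 'a \<Rightarrow> 'a) \<Rightarrow> 'a \<Rightarrow> bool" where
  "is_loop m e \<longleftrightarrow>
     (\<forall>x. m e x = x \<and> m x e = x) \<and>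
     (\<forall>a b. \<exists>!x. m a x = b) \<and>
     (\<forall>a b. \<exists>!y. m y a = b)"

definition right_bol :: "('a \<Rightarrow> 'a \<Rightarrow> 'a) \<Rightarrow> bool" where
  "right_bol m \<longleftrightarrow> (\<forall>x y z. m x (m (m y z) y) = m (m (m x y) z) y)"

definition left_bol :: "('a \<Rightarrow> 'a \<Rightarrow> 'a) \<Rightarrow> bool" where
  "left_bol m \<longleftrightarrow> (\<forall>x y z. m (m x (m y x)) z = m x (m y (m x z)))"

definition moufang_loop :: "('a \<Rightarrow> 'a \<Rightarrow> 'a) \<Rightarrow> 'a \<Rightarrow> bool" where
  "moufang_loop m e \<longleftrightarrow> is_loop m e \<and> right_bol m \<and> left_bol m"

definition anti_automorphism :: "('a \<Rightarrow> 'a \<Rightarrow> 'a) \<Rightarrow> ('a \<Rightarrow> 'a) \<Rightarrow> bool" where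
  "anti_automorphism m \<phi> \<longleftrightarrow> bij \<phi> \<and> (\<forall>x y. \<phi> (m x y) = m (\<phi> y) (\<phi> x))"

end

theory Submission
  imports Defs
begin

theorem proposition2p1:
  fixes m :: "'a \<Rightarrow> 'a \<Rightarrow> 'a" and e :: 'a
  assumes "is_loop m e" and "right_bol m"
    and "\<exists>\<phi>. anti_automorphism m \<phi>"
  shows "moufang_loop m e"
proof -
  obtain f where f: "bij f" and h: "\<And>x y. f (m x y) = m (f y) (f x)"
    using assms(3) unfolding anti_automorphism_def by blast
  have rb: "\<And>x y z. m x (m (m y z) y) = m (m (m x y) z) y"
    using assms(2) unfolding right_bol_def by blast
  have "left_bol m"
    unfolding left_bol_def
  proof (intro allI)
    fix a b c
    obtain y where y: "a = f y" using f by (metis bij_pointE)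
    obtain z where z: "b = f z" using f by (metis bij_pointE)
    obtain x where x: "c = f x" using f by (metis bij_pointE)
    have "f (m x (m (m y z) y)) = f (m (m (m x y) z) y)" using rb by simp
    thus "m (m a (m b a)) c = m a (m b (m a c))"
      using y z x by (simp add: h)
  qed
  thus ?thesis using assms unfolding moufang_loop_def by blast
qed

end
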